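(* Let $r>0$ and suppose $d_{jk}-\theta_{jk}=\varepsilon_{jk}/\sqrt n$, where $\varepsilon_{jk}$ has density $(1-\lambda_j)(\sigma\sqrt{2\pi})^{-1}e^{-x^2/(2\sigma^2)}+\lambda_j\mu(x)$ with $\lambda_j\in[0,1]$, $\lambda_j=0$ for $j\le J_0$, and $\mu$ a symmetric density with $\int x^2\mu=\sigma^2$ and finite fourth moment. Then, as $n\to\infty$, uniformly in $j,k$: (i) $E(d_{jk}-\theta_{jk})^{2i}=O(n^{-i})$ for $i=1,2$; (ii) for every $a>0$ and $j<J_0$, $P(\sqrt n|d_{jk}-\theta_{jk}|>a\sqrt{\ln n})=o(n^{-a^2/(2\sigma^2)})$; (iii) $E[(d_{jk}-\theta_{jk})^2I(\sqrt n|d_{jk}-\theta_{jk}|>\varrho(n))]=O(n^{-4r/(2r+1)})$.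
   Context: $\varrho_0(n)$ is the unique positive solution of $\int_{\varrho_0(n)}^\infty x^2\mu(x)dx=n^{-2r/(2r+1)}$, and $\varrho(n)=\max\big[\varrho_0(n),\ \sigma\sqrt2\sqrt{2r(2r+1)^{-1}\ln n+0.5\ln\ln n}\big]$. $I(\cdot)$ denotes the indicator function. *)

theory Defs
  imports "HOL-Probability.Probability"
begin

definition mix_density :: "real \<Rightarrow> (real \<Rightarrow> real) \<Rightarrow> real \<Rightarrow> real \<Rightarrow> real" where
  "mix_density \<sigma> \<mu> lam x =
     (1 - lam) * (1 / (\<sigma> * sqrt (2 * pi))) * exp (- (x\<^sup>2) / (2 * \<sigma>\<^sup>2)) + lam * \<mu> x"

definition rho_thr :: "(nat \<Rightarrow> real) \<Rightarrow> real \<Rightarrow> real \<Rightarrow> nat \<Rightarrow> real" where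
  "rho_thr rho0 \<sigma> r n = max (rho0 n)
     (\<sigma> * sqrt 2 * sqrt (2 * r / (2 * r + 1) * ln (real n) + 0.5 * ln (ln (real n))))"

end

theory Submission imports Defs "HOL-Real_Asymp.Real_Asymp" begin

lemma mix0_normal:
  assumes "\<sigma> > 0"
  shows "mix_density \<sigma> \<mu> 0 x = normal_density 0 \<sigma> x"
  using assms by (simp add: mix_density_def normal_density_def real_sqrt_mult)

lemma mix_split:
  "mix_density \<sigma> \<mu> l x = (1 - l) * mix_density \<sigma> \<mu> 0 x + l * \<mu> x"
  by (simp add: mix_density_def)

lemma expect_bound:
  fixes X :: "'a \<Rightarrow> real" and g :: "real \<Rightarrow> real"
  assumes M: "prob_space M"
    and dist: "distributed M lborel X (\<lambda>x. ennreal (mix_density \<sigma> \<mu> l x))"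
    and l: "0 \<le> l" "l \<le> 1" and mu: "\<And>x. \<mu> x \<ge> 0" and sigma: "\<sigma> > 0"
    and gm: "g \<in> borel_measurable borel" and g0: "\<And>x. g x \<ge> 0"
    and muM: "\<mu> \<in> borel_measurable borel"
    and A: "(\<integral>\<^sup>+x. ennreal (mix_density \<sigma> \<mu> 0 x * g x) \<partial>lborel) \<le> ennreal A"
    and B: "(\<integral>\<^sup>+x. ennreal (\<mu> x * g x) \<partial>lborel) \<le> ennreal B"
    and A0: "A \<ge> 0" and B0: "B \<ge> 0"
  shows "prob_space.expectation M (\<lambda>\<omega>. g (X \<omega>)) \<le> (1 - l) * A + l * B"
proof -
  have Xm: "X \<in> borel_measurable M"
    using distributed_measurable[OF dist] by (simp add: measurable_lborel2)
  have gX: "(\<lambda>\<omega>. g (X \<omega>)) \<in> borel_measurable M"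
    using measurable_compose[OF Xm gm] by (simp add: comp_def)
  have G0m: "(\<lambda>x. mix_density \<sigma> \<mu> 0 x) \<in> borel_measurable borel"
    unfolding mix_density_def by (intro borel_measurable_add borel_measurable_times muM) auto
  have G0nn: "mix_density \<sigma> \<mu> 0 x \<ge> 0" for x
    using sigma by (simp add: mix_density_def)
  have e1: "prob_space.expectation M (\<lambda>\<omega>. g (X \<omega>)) = enn2real (\<integral>\<^sup>+\<omega>. ennreal (g (X \<omega>)) \<partial>M)"
    by (rule integral_eq_nn_integral[OF gX]) (simp add: g0)
  have e2: "(\<integral>\<^sup>+\<omega>. ennreal (g (X \<omega>)) \<partial>M) = (\<integral>\<^sup>+x. ennreal (mix_density \<sigma> \<mu> l x) * ennreal (g x) \<partial>lborel)"
    by (rule distributed_nn_integral[OF dist, symmetric]) (use gm in simp)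
  have e3: "ennreal (mix_density \<sigma> \<mu> l x) * ennreal (g x) =
      ennreal (1 - l) * ennreal (mix_density \<sigma> \<mu> 0 x * g x) + ennreal l * ennreal (\<mu> x * g x)" for x
  proof -
    have "mix_density \<sigma> \<mu> l x * g x = (1 - l) * (mix_density \<sigma> \<mu> 0 x * g x) + l * (\<mu> x * g x)"
      by (simp add: mix_split[of \<sigma> \<mu> l x] algebra_simps)
    moreover have "(1 - l) * (mix_density \<sigma> \<mu> 0 x * g x) \<ge> 0" "l * (\<mu> x * g x) \<ge> 0"
      using l G0nn[of x] g0[of x] mu[of x] by auto
    ultimately show ?thesis
      using l G0nn[of x] g0[of x] mu[of x]
      by (simp add: ennreal_mult''[symmetric] ennreal_mult'[symmetric] ennreal_plus[symmetric] del: ennreal_plus)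
  qed
  have e4: "(\<integral>\<^sup>+x. ennreal (mix_density \<sigma> \<mu> l x) * ennreal (g x) \<partial>lborel) =
      ennreal (1 - l) * (\<integral>\<^sup>+x. ennreal (mix_density \<sigma> \<mu> 0 x * g x) \<partial>lborel)
      + ennreal l * (\<integral>\<^sup>+x. ennreal (\<mu> x * g x) \<partial>lborel)"
  proof -
    have [measurable]: "g \<in> borel_measurable lborel" "\<mu> \<in> borel_measurable lborel"
       "mix_density \<sigma> \<mu> 0 \<in> borel_measurable lborel"
      using gm muM G0m by auto
    show ?thesis unfolding e3
      by (subst nn_integral_add) (measurable, measurable, simp add: nn_integral_cmult)
  qed
  have "(\<integral>\<^sup>+x. ennreal (mix_density \<sigma> \<mu> l x) * ennreal (g x) \<partial>lborel) \<le> ennreal (1 - l) * ennreal A + ennreal l * ennreal B"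
    unfolding e4 by (intro add_mono mult_left_mono A B) auto
  also have "\<dots> = ennreal ((1 - l) * A + l * B)"
    using l A0 B0 by (simp add: ennreal_mult'[symmetric] ennreal_plus[symmetric] del: ennreal_plus)
  finally have "enn2real (\<integral>\<^sup>+x. ennreal (mix_density \<sigma> \<mu> l x) * ennreal (g x) \<partial>lborel) \<le> (1 - l) * A + l * B"
    using l A0 B0 by (intro enn2real_leI) auto
  then show ?thesis using e1 e2 by simp
qed

lemma sym_tail:
  fixes h :: "real \<Rightarrow> ennreal"
  assumes hm: "h \<in> borel_measurable borel" and hs: "\<And>x. h (-x) = h x" and t: "t \<ge> 0"
  shows "(\<integral>\<^sup>+x. h x * indicator {x. t < \<bar>x\<bar>} x \<partial>lborel) \<le> 2 * (\<integral>\<^sup>+x. h x * indicator {t..} x \<partial>lborel)"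
proof -
  have [measurable]: "h \<in> borel_measurable lborel" using hm by simp
  have "(\<integral>\<^sup>+x. h x * indicator {x. t < \<bar>x\<bar>} x \<partial>lborel)
      \<le> (\<integral>\<^sup>+x. h x * indicator {t..} x + h x * indicator {t..} (-x) \<partial>lborel)"
    by (rule nn_integral_mono) (auto simp: indicator_def)
  also have "\<dots> = (\<integral>\<^sup>+x. h x * indicator {t..} x \<partial>lborel) + (\<integral>\<^sup>+x. h x * indicator {t..} (-x) \<partial>lborel)"
    by (rule nn_integral_add) measurable
  also have "(\<integral>\<^sup>+x. h x * indicator {t..} (-x) \<partial>lborel) = (\<integral>\<^sup>+x. h x * indicator {t..} x \<partial>lborel)"
  proof -
    have "(\<integral>\<^sup>+x. h x * indicator {t..} x \<partial>lborel) = ennreal \<bar>-1\<bar> * (\<integral>\<^sup>+x. h (0 + (-1) * x) * indicator {t..} (0 + (-1) * x) \<partial>lborel)"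
      by (rule nn_integral_real_affine[where f = "\<lambda>x. h x * indicator {t..} x"])
         (auto intro!: borel_measurable_times_ennreal hm borel_measurable_indicator)
    then show ?thesis by (simp add: hs)
  qed
  finally show ?thesis by (simp add: mult_2)
qed

lemma normal0: "\<sigma> > 0 \<Longrightarrow> normal_density 0 \<sigma> x = 1 / (\<sigma> * sqrt (2 * pi)) * exp (- x\<^sup>2 / (2 * \<sigma>\<^sup>2))"
  by (simp add: normal_density_def real_sqrt_mult mult.commute)

lemma gauss_tail:
  assumes sigma: "\<sigma> > 0" and t: "t > 0"
  shows "(\<integral>\<^sup>+x. ennreal (normal_density 0 \<sigma> x) * indicator {t..} x \<partial>lborel)
     \<le> ennreal (\<sigma> / (t * sqrt (2 * pi)) * exp (- t\<^sup>2 / (2 * \<sigma>\<^sup>2)))"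
proof -
  define c where "c = 1 / (\<sigma> * sqrt (2 * pi))"
  have c0: "c > 0" using sigma by (simp add: c_def)
  define f where "f x = c / t * x * exp (- x\<^sup>2 / (2 * \<sigma>\<^sup>2))" for x
  define F where "F x = - (c * \<sigma>\<^sup>2 / t) * exp (- x\<^sup>2 / (2 * \<sigma>\<^sup>2))" for x
  have "(\<integral>\<^sup>+x. ennreal (normal_density 0 \<sigma> x) * indicator {t..} x \<partial>lborel)
      \<le> (\<integral>\<^sup>+x. ennreal (f x) * indicator {t..} x \<partial>lborel)"
  proof (rule nn_integral_mono)
    fix x
    show "ennreal (normal_density 0 \<sigma> x) * indicator {t..} x \<le> ennreal (f x) * indicator {t..} x"
    proof (cases "t \<le> x")
      case True
      have "normal_density 0 \<sigma> x = c * 1 * exp (- x\<^sup>2 / (2 * \<sigma>\<^sup>2))"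
        using sigma by (simp add: normal0 c_def)
      also have "\<dots> \<le> c * (x / t) * exp (- x\<^sup>2 / (2 * \<sigma>\<^sup>2))"
        using True t c0 by (intro mult_right_mono mult_left_mono) auto
      finally show ?thesis using True by (simp add: f_def ennreal_leI)
    qed simp
  qed
  also have "(\<integral>\<^sup>+x. ennreal (f x) * indicator {t..} x \<partial>lborel) = 0 - F t"
  proof (rule nn_integral_FTC_atLeast)
    show "f \<in> borel_measurable borel" unfolding f_def by measurable
    show "DERIV F x :> f x" for x
      unfolding F_def f_def
      using sigma t by (auto intro!: derivative_eq_intros simp: field_simps power2_eq_square)
    show "0 \<le> f x" if "t \<le> x" for x using that t c0 by (simp add: f_def)
    show "(F \<longlongrightarrow> 0) at_top" unfolding F_def using sigma by real_asymp
  qed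
  also have "0 - F t = \<sigma> / (t * sqrt (2 * pi)) * exp (- t\<^sup>2 / (2 * \<sigma>\<^sup>2))"
    using sigma by (simp add: F_def c_def power2_eq_square field_simps)
  finally show ?thesis .
qed

lemma gauss_trick:
  assumes sigma: "\<sigma> > 0" and r: "r > 0" and rho: "\<rho> \<ge> 0"
  shows "(\<integral>\<^sup>+x. ennreal (normal_density 0 \<sigma> x * (x\<^sup>2 * indicator {x. \<rho> < \<bar>x\<bar>} x)) \<partial>lborel)
    \<le> ennreal (exp (- (r / (2 * r + 1)) * \<rho>\<^sup>2 / \<sigma>\<^sup>2) *
         (sqrt (2 * r + 1) * (LINT x|lborel. normal_density 0 (\<sigma> * sqrt (2 * r + 1)) x * x\<^sup>2)))"
proof -
  define c where "c = r / (2 * r + 1)"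
  define s where "s = \<sigma> * sqrt (2 * r + 1)"
  define E where "E = exp (- c * \<rho>\<^sup>2 / \<sigma>\<^sup>2)"
  have s0: "s > 0" using sigma r by (simp add: s_def)
  have s2: "s\<^sup>2 = \<sigma>\<^sup>2 * (2 * r + 1)" using r by (simp add: s_def power_mult_distrib)
  have key: "sqrt (2 * r + 1) * normal_density 0 s x = normal_density 0 \<sigma> x * exp (c * x\<^sup>2 / \<sigma>\<^sup>2)" for x
  proof -
    have e: "- x\<^sup>2 / (2 * s\<^sup>2) = - x\<^sup>2 / (2 * \<sigma>\<^sup>2) + c * x\<^sup>2 / \<sigma>\<^sup>2"
    proof -
      have a: "2 * r + 1 > 0" using r by simp
      have b: "\<sigma>\<^sup>2 > 0" using sigma by simp
      have "- x\<^sup>2 / (2 * (\<sigma>\<^sup>2 * (2 * r + 1))) = - x\<^sup>2 / (2 * \<sigma>\<^sup>2) + r / (2 * r + 1) * x\<^sup>2 / \<sigma>\<^sup>2"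
        using a b by (simp add: divide_simps) (simp add: algebra_simps)
      then show ?thesis unfolding s2 c_def .
    qed
    have "sqrt (2 * r + 1) * normal_density 0 s x = 1 / (\<sigma> * sqrt (2 * pi)) * exp (- x\<^sup>2 / (2 * s\<^sup>2))"
      using s0 sigma r by (simp add: normal0 s_def field_simps)
    also have "\<dots> = normal_density 0 \<sigma> x * exp (c * x\<^sup>2 / \<sigma>\<^sup>2)"
      unfolding e exp_add using sigma by (simp add: normal0)
    finally show ?thesis .
  qed
  have pw: "normal_density 0 \<sigma> x * (x\<^sup>2 * indicator {x. \<rho> < \<bar>x\<bar>} x) \<le> E * (sqrt (2 * r + 1) * (normal_density 0 s x * x\<^sup>2))" for x
  proof (cases "\<rho> < \<bar>x\<bar>")
    case True
    have "\<rho>\<^sup>2 \<le> x\<^sup>2" using True rho by (metis abs_le_square_iff abs_of_nonneg less_imp_le)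
    then have "c * \<rho>\<^sup>2 / \<sigma>\<^sup>2 \<le> c * x\<^sup>2 / \<sigma>\<^sup>2" using r sigma
      by (intro divide_right_mono mult_left_mono) (auto simp: c_def)
    then have "1 \<le> E * exp (c * x\<^sup>2 / \<sigma>\<^sup>2)"
      unfolding E_def by (simp add: exp_add[symmetric])
    then have "normal_density 0 \<sigma> x * x\<^sup>2 * 1 \<le> normal_density 0 \<sigma> x * x\<^sup>2 * (E * exp (c * x\<^sup>2 / \<sigma>\<^sup>2))"
      by (intro mult_left_mono) auto
    also have "\<dots> = E * (sqrt (2 * r + 1) * (normal_density 0 s x * x\<^sup>2))"
      by (simp add: key[symmetric] ac_simps)
    finally show ?thesis using True by simp
  next
    case False
    then show ?thesis using r by (simp add: E_def)
  qed
  have "(\<integral>\<^sup>+x. ennreal (normal_density 0 \<sigma> x * (x\<^sup>2 * indicator {x. \<rho> < \<bar>x\<bar>} x)) \<partial>lborel)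
     \<le> (\<integral>\<^sup>+x. ennreal (E * sqrt (2 * r + 1)) * ennreal (normal_density 0 s x * x\<^sup>2) \<partial>lborel)"
    by (rule nn_integral_mono) (use pw in \<open>auto simp: ennreal_mult''[symmetric] ennreal_leI ac_simps\<close>)
  also have "\<dots> = ennreal (E * sqrt (2 * r + 1)) * (\<integral>\<^sup>+x. ennreal (normal_density 0 s x * x\<^sup>2) \<partial>lborel)"
    by (rule nn_integral_cmult) measurable
  also have "(\<integral>\<^sup>+x. ennreal (normal_density 0 s x * x\<^sup>2) \<partial>lborel) = ennreal (LINT x|lborel. normal_density 0 s x * x\<^sup>2)"
  proof -
    have "integrable lborel (\<lambda>x. normal_density 0 s x * x\<^sup>2)"
      using integrable_normal_moment[of s 0 2] s0 by simp
    then show ?thesis by (intro nn_integral_eq_integral) auto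
  qed
  also have "ennreal (E * sqrt (2 * r + 1)) * \<dots> = ennreal (E * (sqrt (2 * r + 1) * (LINT x|lborel. normal_density 0 s x * x\<^sup>2)))"
    by (simp add: ennreal_mult'[symmetric] E_def ac_simps)
  finally show ?thesis by (simp add: E_def c_def s_def)
qed

lemma mu_tail:
  fixes \<mu> :: "real \<Rightarrow> real"
  assumes mu_meas: "\<mu> \<in> borel_measurable borel" and mu_nonneg: "\<And>x. \<mu> x \<ge> 0"
    and mu_sym: "\<And>x. \<mu> (- x) = \<mu> x"
    and mu_var: "integrable lborel (\<lambda>x. x\<^sup>2 * \<mu> x)"
    and r0: "\<rho>0 > 0" and r0r: "\<rho>0 \<le> \<rho>"
  shows "(\<integral>\<^sup>+x. ennreal (\<mu> x * (x\<^sup>2 * indicator {x. \<rho> < \<bar>x\<bar>} x)) \<partial>lborel)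
     \<le> ennreal (2 * (LINT x:{\<rho>0..}|lborel. x\<^sup>2 * \<mu> x))"
proof -
  have [measurable]: "\<mu> \<in> borel_measurable lborel" using mu_meas by simp
  let ?h = "\<lambda>x. ennreal (x\<^sup>2 * \<mu> x)"
  have "(\<integral>\<^sup>+x. ennreal (\<mu> x * (x\<^sup>2 * indicator {x. \<rho> < \<bar>x\<bar>} x)) \<partial>lborel)
      = (\<integral>\<^sup>+x. ?h x * indicator {x. \<rho> < \<bar>x\<bar>} x \<partial>lborel)"
    by (intro nn_integral_cong) (auto simp: indicator_def mult.commute)
  also have "\<dots> \<le> 2 * (\<integral>\<^sup>+x. ?h x * indicator {\<rho>..} x \<partial>lborel)"
    by (rule sym_tail) (use r0 r0r mu_sym in auto)
  also have "(\<integral>\<^sup>+x. ?h x * indicator {\<rho>..} x \<partial>lborel) \<le> (\<integral>\<^sup>+x. ?h x * indicator {\<rho>0..} x \<partial>lborel)"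
    by (rule nn_integral_mono) (use r0r in \<open>auto simp: indicator_def\<close>)
  also have "(\<integral>\<^sup>+x. ?h x * indicator {\<rho>0..} x \<partial>lborel) = (\<integral>\<^sup>+x. ennreal (indicator {\<rho>0..} x *\<^sub>R (x\<^sup>2 * \<mu> x)) \<partial>lborel)"
    by (intro nn_integral_cong) (auto simp: indicator_def)
  also have "\<dots> = ennreal (LINT x:{\<rho>0..}|lborel. x\<^sup>2 * \<mu> x)"
    unfolding set_lebesgue_integral_def
    by (intro nn_integral_eq_integral integrable_mult_indicator mu_var) (auto simp: mu_nonneg)
  finally have "(\<integral>\<^sup>+x. ennreal (\<mu> x * (x\<^sup>2 * indicator {x. \<rho> < \<bar>x\<bar>} x)) \<partial>lborel)
     \<le> 2 * ennreal (LINT x:{\<rho>0..}|lborel. x\<^sup>2 * \<mu> x)" by (metis mult_left_mono zero_le)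
  moreover have "2 * ennreal (LINT x:{\<rho>0..}|lborel. x\<^sup>2 * \<mu> x) = ennreal (2 * (LINT x:{\<rho>0..}|lborel. x\<^sup>2 * \<mu> x))"
    by (simp add: ennreal_mult')
  ultimately show ?thesis by simp
qed

theorem lemma3:
  fixes M :: "'a measure"
    and \<sigma> r :: real and \<mu> :: "real \<Rightarrow> real" and lam :: "nat \<Rightarrow> real" and J0 :: nat
    and eps :: "nat \<Rightarrow> nat \<Rightarrow> 'a \<Rightarrow> real"
    and d :: "nat \<Rightarrow> nat \<Rightarrow> nat \<Rightarrow> 'a \<Rightarrow> real" and \<theta> :: "nat \<Rightarrow> nat \<Rightarrow> nat \<Rightarrow> real"
    and rho0 :: "nat \<Rightarrow> real"
  assumes M: "prob_space M"
    and r: "r > 0" and sigma: "\<sigma> > 0"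
    and mu_meas: "\<mu> \<in> borel_measurable borel"
    and mu_nonneg: "\<And>x. \<mu> x \<ge> 0"
    and mu_int: "integrable lborel \<mu>" and mu_one: "(\<integral>x. \<mu> x \<partial>lborel) = 1"
    and mu_sym: "\<And>x. \<mu> (- x) = \<mu> x"
    and mu_var: "integrable lborel (\<lambda>x. x\<^sup>2 * \<mu> x)" "(\<integral>x. x\<^sup>2 * \<mu> x \<partial>lborel) = \<sigma>\<^sup>2"
    and mu_4th: "integrable lborel (\<lambda>x. x ^ 4 * \<mu> x)"
    and lam: "\<And>j. 0 \<le> lam j \<and> lam j \<le> 1"
    and lam0: "\<And>j. j \<le> J0 \<Longrightarrow> lam j = 0"
    and eps_distr: "\<And>j k. distributed M lborel (eps j k) (\<lambda>x. ennreal (mix_density \<sigma> \<mu> (lam j) x))"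
    and d_def: "\<And>n j k \<omega>. \<omega> \<in> space M \<Longrightarrow> d n j k \<omega> - \<theta> n j k = eps j k \<omega> / sqrt (real n)"
    and rho0: "\<forall>\<^sub>F n in sequentially. rho0 n > 0 \<and>
                 (LINT x:{rho0 n..}|lborel. x\<^sup>2 * \<mu> x) = real n powr (- (2 * r / (2 * r + 1)))"
  shows
    "(\<forall>i\<in>{1::nat, 2}. \<exists>C. \<forall>\<^sub>F n in sequentially. \<forall>j k.
        prob_space.expectation M (\<lambda>\<omega>. (d n j k \<omega> - \<theta> n j k) ^ (2 * i))
          \<le> C * real n powr (- real i))
     \<and> (\<forall>a > 0. \<forall>e > 0. \<forall>\<^sub>F n in sequentially. \<forall>j k. j < J0 \<longrightarrow>
        prob_space.prob M {\<omega> \<in> space M. sqrt (real n) * \<bar>d n j k \<omega> - \<theta> n j k\<bar> > a * sqrt (ln (real n))}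
          \<le> e * real n powr (- (a\<^sup>2 / (2 * \<sigma>\<^sup>2))))
     \<and> (\<exists>C. \<forall>\<^sub>F n in sequentially. \<forall>j k.
        prob_space.expectation M (\<lambda>\<omega>. (d n j k \<omega> - \<theta> n j k)\<^sup>2 *
            (if sqrt (real n) * \<bar>d n j k \<omega> - \<theta> n j k\<bar> > rho_thr rho0 \<sigma> r n then 1 else 0))
          \<le> C * real n powr (- (4 * r / (2 * r + 1))))"
proof -
  interpret P: prob_space M by (rule M)
  have lamj: "0 \<le> lam j" "lam j \<le> 1" for j using lam by auto
  have dd: "d n j k \<omega> - \<theta> n j k = eps j k \<omega> / sqrt (real n)" if "\<omega> \<in> space M" for n j k \<omega>
    using d_def that by blast
  have G0nn: "\<And>x. mix_density \<sigma> \<mu> 0 x = normal_density 0 \<sigma> x" using mix0_normal sigma by blast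
  have part1: "\<exists>C. \<forall>\<^sub>F n in sequentially. \<forall>j k.
        prob_space.expectation M (\<lambda>\<omega>. (d n j k \<omega> - \<theta> n j k) ^ (2 * i))
          \<le> C * real n powr (- real i)" if i: "i \<in> {1::nat, 2}" for i
  proof -
    have muint: "integrable lborel (\<lambda>x. x ^ (2 * i) * \<mu> x)"
      using i mu_var(1) mu_4th by auto
    define CG where "CG = (LINT x|lborel. normal_density 0 \<sigma> x * x ^ (2 * i))"
    define CM where "CM = (LINT x|lborel. x ^ (2 * i) * \<mu> x)"
    have intG: "integrable lborel (\<lambda>x. normal_density 0 \<sigma> x * x ^ (2 * i))"
      using integrable_normal_moment[of \<sigma> 0 "2 * i"] sigma by simp
    have CG0: "CG \<ge> 0" unfolding CG_def by (intro Bochner_Integration.integral_nonneg) (simp add: power_even_eq)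
    have CM0: "CM \<ge> 0" unfolding CM_def using mu_nonneg by (intro Bochner_Integration.integral_nonneg) (simp add: power_even_eq)
    have bnd: "P.expectation (\<lambda>\<omega>. eps j k \<omega> ^ (2 * i)) \<le> CG + CM" for j k
    proof -
      have "P.expectation (\<lambda>\<omega>. eps j k \<omega> ^ (2 * i)) \<le> (1 - lam j) * CG + lam j * CM"
      proof (rule expect_bound[OF M eps_distr lamj mu_nonneg sigma _ _ mu_meas _ _ CG0 CM0])
        show "(\<lambda>x::real. x ^ (2 * i)) \<in> borel_measurable borel" by (intro borel_measurable_power) simp
        show "0 \<le> x ^ (2 * i)" for x :: real by (simp add: power_even_eq)
        have "(\<integral>\<^sup>+x. ennreal (mix_density \<sigma> \<mu> 0 x * x ^ (2 * i)) \<partial>lborel) = ennreal CG"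
          unfolding G0nn CG_def using intG by (intro nn_integral_eq_integral) (auto simp: power_even_eq)
        then show "(\<integral>\<^sup>+x. ennreal (mix_density \<sigma> \<mu> 0 x * x ^ (2 * i)) \<partial>lborel) \<le> ennreal CG" by simp
        have "(\<integral>\<^sup>+x. ennreal (\<mu> x * x ^ (2 * i)) \<partial>lborel) = ennreal CM"
        proof -
          have "(\<integral>\<^sup>+x. ennreal (\<mu> x * x ^ (2 * i)) \<partial>lborel) = (\<integral>\<^sup>+x. ennreal (x ^ (2 * i) * \<mu> x) \<partial>lborel)"
            by (simp add: mult.commute)
          also have "\<dots> = ennreal CM"
            unfolding CM_def using muint mu_nonneg
            by (intro nn_integral_eq_integral) (auto simp: power_even_eq intro!: AE_I2)
          finally show ?thesis .
        qed
        then show "(\<integral>\<^sup>+x. ennreal (\<mu> x * x ^ (2 * i)) \<partial>lborel) \<le> ennreal CM" by simp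
      qed
      also have "\<dots> \<le> (1 - lam j) * (CG + CM) + lam j * (CG + CM)"
        using lamj[of j] CG0 CM0 by (intro add_mono mult_left_mono) auto
      finally show ?thesis by (simp add: algebra_simps)
    qed
    show ?thesis
    proof (intro exI[of _ "CG + CM"] eventually_mono[OF eventually_gt_at_top[of 0]] allI)
      fix n j k :: nat assume n: "n > 0"
      have "P.expectation (\<lambda>\<omega>. (d n j k \<omega> - \<theta> n j k) ^ (2 * i)) = P.expectation (\<lambda>\<omega>. eps j k \<omega> ^ (2 * i) / real n ^ i)"
      proof (rule Bochner_Integration.integral_cong[OF refl])
        fix \<omega> assume "\<omega> \<in> space M"
        then show "(d n j k \<omega> - \<theta> n j k) ^ (2 * i) = eps j k \<omega> ^ (2 * i) / real n ^ i"
          by (simp add: dd power_divide power_mult)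
      qed
      also have "\<dots> = P.expectation (\<lambda>\<omega>. eps j k \<omega> ^ (2 * i)) / real n ^ i" by simp
      also have "\<dots> \<le> (CG + CM) / real n ^ i" using bnd n by (intro divide_right_mono) auto
      also have "\<dots> = (CG + CM) * real n powr (- real i)"
        using n by (simp add: powr_minus powr_realpow divide_inverse)
      finally show "P.expectation (\<lambda>\<omega>. (d n j k \<omega> - \<theta> n j k) ^ (2 * i)) \<le> (CG + CM) * real n powr (- real i)" .
    qed
  qed
  have part2: "\<forall>\<^sub>F n in sequentially. \<forall>j k. j < J0 \<longrightarrow>
        prob_space.prob M {\<omega> \<in> space M. sqrt (real n) * \<bar>d n j k \<omega> - \<theta> n j k\<bar> > a * sqrt (ln (real n))}
          \<le> e * real n powr (- (a\<^sup>2 / (2 * \<sigma>\<^sup>2)))" if a: "a > 0" and e: "e > 0" for a e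
  proof -
    define D where "D = 2 * \<sigma> / (a * e * sqrt (2 * pi))"
    have lnlim: "filterlim (\<lambda>n::nat. ln (real n)) at_top sequentially"
      by (rule filterlim_compose[OF ln_at_top filterlim_real_sequentially])
    have ev1: "\<forall>\<^sub>F n in sequentially. ln (real n) \<ge> D\<^sup>2 + 1"
      using lnlim by (simp add: filterlim_at_top)
    show ?thesis
    proof (rule eventually_mono[OF ev1], intro allI impI)
      fix n j k :: nat assume ln: "ln (real n) \<ge> D\<^sup>2 + 1" and j: "j < J0"
      have lnpos: "ln (real n) > 0" using ln by (smt (verit) zero_le_power2)
      then have n: "real n > 0" by (cases "n = 0") auto
      define t where "t = a * sqrt (ln (real n))"
      have t0: "t > 0" using a lnpos by (simp add: t_def)
      have lj: "lam j = 0" using lam0 j by simp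
      define A where "A = 2 * (\<sigma> / (t * sqrt (2 * pi)) * exp (- t\<^sup>2 / (2 * \<sigma>\<^sup>2)))"
      have A0: "A \<ge> 0" using sigma t0 by (simp add: A_def)
      let ?g = "\<lambda>x::real. indicator {x. t < \<bar>x\<bar>} x :: real"
      have "{\<omega> \<in> space M. sqrt (real n) * \<bar>d n j k \<omega> - \<theta> n j k\<bar> > a * sqrt (ln (real n))}
          = {\<omega> \<in> space M. t < \<bar>eps j k \<omega>\<bar>}"
        using n by (auto simp: dd t_def abs_divide)
      then have "P.prob {\<omega> \<in> space M. sqrt (real n) * \<bar>d n j k \<omega> - \<theta> n j k\<bar> > a * sqrt (ln (real n))}
          = P.expectation (\<lambda>\<omega>. ?g (eps j k \<omega>))"
      proof -
        have "P.expectation (\<lambda>\<omega>. ?g (eps j k \<omega>)) = P.expectation (indicator {\<omega> \<in> space M. t < \<bar>eps j k \<omega>\<bar>})"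
          by (intro Bochner_Integration.integral_cong) (auto simp: indicator_def)
        also have "\<dots> = P.prob ({\<omega> \<in> space M. t < \<bar>eps j k \<omega>\<bar>} \<inter> space M)" by simp
        also have "{\<omega> \<in> space M. t < \<bar>eps j k \<omega>\<bar>} \<inter> space M = {\<omega> \<in> space M. t < \<bar>eps j k \<omega>\<bar>}" by auto
        finally show ?thesis using \<open>{\<omega> \<in> space M. _} = _\<close> by simp
      qed
      also have "\<dots> \<le> (1 - lam j) * A + lam j * 1"
      proof (rule expect_bound[OF M eps_distr lamj mu_nonneg sigma _ _ mu_meas _ _ A0])
        show "?g \<in> borel_measurable borel" by (intro borel_measurable_indicator) measurable
        show "0 \<le> ?g x" for x by simp
        have "(\<integral>\<^sup>+x. ennreal (mix_density \<sigma> \<mu> 0 x * ?g x) \<partial>lborel)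
            = (\<integral>\<^sup>+x. ennreal (normal_density 0 \<sigma> x) * indicator {x. t < \<bar>x\<bar>} x \<partial>lborel)"
          unfolding G0nn by (intro nn_integral_cong) (auto simp: indicator_def)
        also have "\<dots> \<le> 2 * (\<integral>\<^sup>+x. ennreal (normal_density 0 \<sigma> x) * indicator {t..} x \<partial>lborel)"
          by (rule sym_tail) (use t0 in \<open>auto simp: normal_density_def\<close>)
        also have "\<dots> \<le> 2 * ennreal (\<sigma> / (t * sqrt (2 * pi)) * exp (- t\<^sup>2 / (2 * \<sigma>\<^sup>2)))"
          by (intro mult_left_mono gauss_tail sigma t0) simp
        also have "\<dots> = ennreal A" unfolding A_def by (subst ennreal_mult'[of 2]) auto
        finally show "(\<integral>\<^sup>+x. ennreal (mix_density \<sigma> \<mu> 0 x * ?g x) \<partial>lborel) \<le> ennreal A" .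
        have "(\<integral>\<^sup>+x. ennreal (\<mu> x * ?g x) \<partial>lborel) \<le> (\<integral>\<^sup>+x. ennreal (\<mu> x) \<partial>lborel)"
          by (intro nn_integral_mono) (auto simp: indicator_def intro!: ennreal_leI mu_nonneg)
        also have "\<dots> = ennreal 1"
          using mu_int mu_one mu_nonneg by (subst nn_integral_eq_integral) auto
        finally show "(\<integral>\<^sup>+x. ennreal (\<mu> x * ?g x) \<partial>lborel) \<le> ennreal 1" .
      qed simp
      also have "\<dots> = A" using lj by simp
      also have "A = (2 * \<sigma> / (t * sqrt (2 * pi))) * real n powr (- (a\<^sup>2 / (2 * \<sigma>\<^sup>2)))"
      proof -
        have "t\<^sup>2 = a\<^sup>2 * ln (real n)" using lnpos by (simp add: t_def power_mult_distrib)
        then have "exp (- t\<^sup>2 / (2 * \<sigma>\<^sup>2)) = exp ((- (a\<^sup>2 / (2 * \<sigma>\<^sup>2))) * ln (real n))"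
          by (simp add: field_simps)
        also have "\<dots> = real n powr (- (a\<^sup>2 / (2 * \<sigma>\<^sup>2)))" using n by (simp add: powr_def)
        finally show ?thesis by (simp add: A_def)
      qed
      also have "\<dots> \<le> e * real n powr (- (a\<^sup>2 / (2 * \<sigma>\<^sup>2)))"
      proof (rule mult_right_mono)
        have "D \<le> sqrt (ln (real n))"
        proof -
          have "D \<le> sqrt (D\<^sup>2)" by simp
          also have "\<dots> \<le> sqrt (ln (real n))" using ln by (intro real_sqrt_le_mono) simp
          finally show ?thesis .
        qed
        then have "2 * \<sigma> / (a * e * sqrt (2 * pi)) \<le> sqrt (ln (real n))" by (simp add: D_def)
        then have "2 * \<sigma> \<le> sqrt (ln (real n)) * (a * e * sqrt (2 * pi))"
          using a e by (simp add: divide_le_eq)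
        moreover have tp: "t * sqrt (2 * pi) > 0" using t0 by simp
        ultimately show "2 * \<sigma> / (t * sqrt (2 * pi)) \<le> e"
          by (subst pos_divide_le_eq[OF tp]) (simp add: t_def ac_simps)
      qed simp
      finally show "P.prob {\<omega> \<in> space M. sqrt (real n) * \<bar>d n j k \<omega> - \<theta> n j k\<bar> > a * sqrt (ln (real n))}
          \<le> e * real n powr (- (a\<^sup>2 / (2 * \<sigma>\<^sup>2)))" .
    qed
  qed
  define Kg where "Kg = sqrt (2 * r + 1) * (LINT x|lborel. normal_density 0 (\<sigma> * sqrt (2 * r + 1)) x * x\<^sup>2)"
  have Kg0: "Kg \<ge> 0" unfolding Kg_def using r
    by (intro mult_nonneg_nonneg Bochner_Integration.integral_nonneg) auto
  have part3: "\<forall>\<^sub>F n in sequentially. \<forall>j k.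
        prob_space.expectation M (\<lambda>\<omega>. (d n j k \<omega> - \<theta> n j k)\<^sup>2 *
            (if sqrt (real n) * \<bar>d n j k \<omega> - \<theta> n j k\<bar> > rho_thr rho0 \<sigma> r n then 1 else 0))
          \<le> (Kg + 2) * real n powr (- (4 * r / (2 * r + 1)))"
  proof (rule eventually_mono[OF eventually_conj[OF eventually_ge_at_top[of 3] rho0]], intro allI)
    fix n j k :: nat
    assume asm: "3 \<le> n \<and> 0 < rho0 n \<and> (LINT x:{rho0 n..}|lborel. x\<^sup>2 * \<mu> x) = real n powr (- (2 * r / (2 * r + 1)))"
    then have n3: "real n \<ge> 3" and r0: "rho0 n > 0"
      and r0int: "(LINT x:{rho0 n..}|lborel. x\<^sup>2 * \<mu> x) = real n powr (- (2 * r / (2 * r + 1)))" by auto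
    have n: "real n > 0" using n3 by simp
    define \<rho> where "\<rho> = rho_thr rho0 \<sigma> r n"
    define q where "q = 2 * r / (2 * r + 1) * ln (real n) + 0.5 * ln (ln (real n))"
    define Pw where "Pw = real n powr ((1 - 2 * r) / (2 * r + 1))"
    have Pw0: "Pw \<ge> 0" by (simp add: Pw_def)
    have ln1: "ln (real n) \<ge> 1"
    proof -
      have "1 = ln (exp (1::real))" by (rule ln_exp[symmetric])
      also have "\<dots> \<le> ln (real n)" using exp_le n3 by (subst ln_le_cancel_iff) auto
      finally show ?thesis .
    qed
    have lnln: "ln (ln (real n)) \<ge> 0" using ln1 by simp
    have q1: "q \<ge> 2 * r / (2 * r + 1) * ln (real n)" using lnln by (simp add: q_def)
    have q0: "2 * r / (2 * r + 1) * ln (real n) \<ge> 0" using r ln1 by simp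
    have rho_ge: "\<rho> \<ge> \<sigma> * sqrt 2 * sqrt q" by (simp add: \<rho>_def rho_thr_def q_def)
    have rho_ge0: "\<rho> \<ge> rho0 n" by (simp add: \<rho>_def rho_thr_def)
    have sq0: "\<sigma> * sqrt 2 * sqrt q \<ge> 0" using sigma q1 q0 by simp
    have rho0': "\<rho> \<ge> 0" using rho_ge sq0 by linarith
    have rho2: "\<rho>\<^sup>2 \<ge> 2 * \<sigma>\<^sup>2 * q"
    proof -
      have "(\<sigma> * sqrt 2 * sqrt q)\<^sup>2 \<le> \<rho>\<^sup>2" using rho_ge sq0 by (intro power_mono) auto
      moreover have "(\<sigma> * sqrt 2 * sqrt q)\<^sup>2 = 2 * \<sigma>\<^sup>2 * q" using q1 q0 by (simp add: power_mult_distrib)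
      ultimately show ?thesis by simp
    qed
    have expb: "exp (- (r / (2 * r + 1)) * \<rho>\<^sup>2 / \<sigma>\<^sup>2) \<le> Pw"
    proof -
      have "(4 * r\<^sup>2 / (2 * r + 1)\<^sup>2) * ln (real n) \<le> (r / (2 * r + 1)) * \<rho>\<^sup>2 / \<sigma>\<^sup>2"
      proof -
        have "(4 * r\<^sup>2 / (2 * r + 1)\<^sup>2) * ln (real n) = (r / (2 * r + 1)) * (2 * (2 * r / (2 * r + 1) * ln (real n)))"
          by (simp add: power2_eq_square field_simps)
        also have "\<dots> \<le> (r / (2 * r + 1)) * (2 * q)" using q1 r by (intro mult_left_mono) auto
        also have "\<dots> = (r / (2 * r + 1)) * (2 * \<sigma>\<^sup>2 * q) / \<sigma>\<^sup>2" using sigma by simp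
        also have "\<dots> \<le> (r / (2 * r + 1)) * \<rho>\<^sup>2 / \<sigma>\<^sup>2" using rho2 r by (intro divide_right_mono mult_left_mono) auto
        finally show ?thesis .
      qed
      then have "exp (- (r / (2 * r + 1)) * \<rho>\<^sup>2 / \<sigma>\<^sup>2) \<le> exp ((- (4 * r\<^sup>2 / (2 * r + 1)\<^sup>2)) * ln (real n))"
        by simp
      also have "\<dots> = real n powr (- (4 * r\<^sup>2 / (2 * r + 1)\<^sup>2))" using n by (simp add: powr_def)
      also have "\<dots> \<le> Pw" unfolding Pw_def
      proof (rule powr_mono)
        have "- (4 * r\<^sup>2) \<le> (1 - 2 * r) * (2 * r + 1)" by (simp add: algebra_simps power2_eq_square)
        then show "- (4 * r\<^sup>2 / (2 * r + 1)\<^sup>2) \<le> (1 - 2 * r) / (2 * r + 1)"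
          using r by (simp add: divide_simps power2_eq_square)
      qed (use n3 in simp)
      finally show ?thesis .
    qed
    define A where "A = exp (- (r / (2 * r + 1)) * \<rho>\<^sup>2 / \<sigma>\<^sup>2) * Kg"
    define B where "B = 2 * (LINT x:{rho0 n..}|lborel. x\<^sup>2 * \<mu> x)"
    have A0: "A \<ge> 0" using Kg0 by (simp add: A_def)
    have B0: "B \<ge> 0" unfolding B_def r0int by simp
    have AP: "A \<le> (Kg + 2) * Pw"
    proof -
      have "A \<le> Pw * Kg" unfolding A_def by (rule mult_right_mono[OF expb Kg0])
      also have "\<dots> \<le> (Kg + 2) * Pw" using Pw0 by (simp add: ring_distribs mult.commute)
      finally show ?thesis .
    qed
    have BP: "B \<le> (Kg + 2) * Pw"
    proof -
      have "real n powr (- (2 * r / (2 * r + 1))) \<le> Pw" unfolding Pw_def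
        using r n3 by (intro powr_mono) (auto simp: divide_simps)
      then have "B \<le> 2 * Pw" unfolding B_def r0int by simp
      also have "\<dots> \<le> (Kg + 2) * Pw" using Pw0 Kg0 by (simp add: ring_distribs)
      finally show ?thesis .
    qed
    let ?g = "\<lambda>x::real. x\<^sup>2 * indicator {x. \<rho> < \<bar>x\<bar>} x"
    have "P.expectation (\<lambda>\<omega>. (d n j k \<omega> - \<theta> n j k)\<^sup>2 *
            (if sqrt (real n) * \<bar>d n j k \<omega> - \<theta> n j k\<bar> > rho_thr rho0 \<sigma> r n then 1 else 0))
        = P.expectation (\<lambda>\<omega>. ?g (eps j k \<omega>) / real n)"
    proof (rule Bochner_Integration.integral_cong[OF refl])
      fix \<omega> assume "\<omega> \<in> space M"
      then show "(d n j k \<omega> - \<theta> n j k)\<^sup>2 *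
            (if sqrt (real n) * \<bar>d n j k \<omega> - \<theta> n j k\<bar> > rho_thr rho0 \<sigma> r n then 1 else 0) = ?g (eps j k \<omega>) / real n"
        using n by (simp add: dd power_divide abs_divide \<rho>_def indicator_def)
    qed
    also have "\<dots> = P.expectation (\<lambda>\<omega>. ?g (eps j k \<omega>)) / real n" by simp
    finally have eqn: "P.expectation (\<lambda>\<omega>. (d n j k \<omega> - \<theta> n j k)\<^sup>2 *
            (if sqrt (real n) * \<bar>d n j k \<omega> - \<theta> n j k\<bar> > rho_thr rho0 \<sigma> r n then 1 else 0))
        = P.expectation (\<lambda>\<omega>. ?g (eps j k \<omega>)) / real n" .
    have "P.expectation (\<lambda>\<omega>. ?g (eps j k \<omega>)) \<le> (1 - lam j) * A + lam j * B"
    proof (rule expect_bound[OF M eps_distr lamj mu_nonneg sigma _ _ mu_meas _ _ A0 B0])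
      show "?g \<in> borel_measurable borel"
        by (intro borel_measurable_times borel_measurable_indicator borel_measurable_power) (simp_all, measurable)
      show "0 \<le> ?g x" for x by simp
      have "(\<integral>\<^sup>+x. ennreal (mix_density \<sigma> \<mu> 0 x * ?g x) \<partial>lborel)
          = (\<integral>\<^sup>+x. ennreal (normal_density 0 \<sigma> x * (x\<^sup>2 * indicator {x. \<rho> < \<bar>x\<bar>} x)) \<partial>lborel)"
        unfolding G0nn ..
      also have "\<dots> \<le> ennreal A" unfolding A_def Kg_def
        using gauss_trick[OF sigma r rho0'] by (simp add: mult.assoc)
      finally show "(\<integral>\<^sup>+x. ennreal (mix_density \<sigma> \<mu> 0 x * ?g x) \<partial>lborel) \<le> ennreal A" .
      show "(\<integral>\<^sup>+x. ennreal (\<mu> x * ?g x) \<partial>lborel) \<le> ennreal B"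
        unfolding B_def by (rule mu_tail[OF mu_meas mu_nonneg mu_sym mu_var(1) r0 rho_ge0])
    qed
    also have "(1 - lam j) * A + lam j * B \<le> (1 - lam j) * ((Kg + 2) * Pw) + lam j * ((Kg + 2) * Pw)"
      using lamj[of j] AP BP by (intro add_mono mult_left_mono) auto
    also have "\<dots> = (Kg + 2) * Pw" by (simp add: algebra_simps)
    finally have Eg: "P.expectation (\<lambda>\<omega>. ?g (eps j k \<omega>)) \<le> (Kg + 2) * Pw" .
    have "Pw / real n = real n powr ((1 - 2 * r) / (2 * r + 1) - 1)"
      unfolding Pw_def using n by (simp add: powr_diff)
    also have "(1 - 2 * r) / (2 * r + 1) - 1 = - (4 * r / (2 * r + 1))"
      using r by (simp add: field_simps)
    finally have PwN: "Pw / real n = real n powr (- (4 * r / (2 * r + 1)))" .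
    have "P.expectation (\<lambda>\<omega>. ?g (eps j k \<omega>)) / real n \<le> (Kg + 2) * Pw / real n"
      using Eg n by (intro divide_right_mono) auto
    also have "(Kg + 2) * Pw / real n = (Kg + 2) * real n powr (- (4 * r / (2 * r + 1)))"
      using PwN by (metis times_divide_eq_right)
    finally show "P.expectation (\<lambda>\<omega>. (d n j k \<omega> - \<theta> n j k)\<^sup>2 *
            (if sqrt (real n) * \<bar>d n j k \<omega> - \<theta> n j k\<bar> > rho_thr rho0 \<sigma> r n then 1 else 0))
          \<le> (Kg + 2) * real n powr (- (4 * r / (2 * r + 1)))"
      unfolding eqn .
  qed
  show ?thesis using part1 part2 part3 by blast
qed

end
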